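(* Let $k\ge4$ be an integer, $\eta\in[\eta_{k+1},\eta_k)$, and $j\ge k$ an integer. Then $\Psi_j(\eta)>0$, where $\Psi_j(\eta)=\sin\eta+|a|^{j-2}\sin((j+1)\eta)$.
   Context: For $\eta\in(0,\pi/3)$ let $|a|=\frac{1}{2\cos\eta}$. For integers $k\ge1$ let $\Phi_k(\eta)=(1-|a|^4)\sin((k-1)\eta)-|a|^3\sin((k-2)\eta)+|a|^k\sin\eta$. For each integer $k\ge4$, $\Phi_k$ has a unique zero in $(\pi/k,\pi/(k-1))$, denoted $\eta_k$. *)

theory Defs
  imports Complex_Main
begin

definition absa :: "real \<Rightarrow> real" where
  "absa \<eta> = 1 / (2 * cos \<eta>)"

definition Phi :: "nat \<Rightarrow> real \<Rightarrow> real" where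
  "Phi k \<eta> = (1 - absa \<eta> ^ 4) * sin ((real k - 1) * \<eta>)
              - absa \<eta> ^ 3 * sin ((real k - 2) * \<eta>)
              + absa \<eta> ^ k * sin \<eta>"

text \<open>eta_k: the unique zero of Phi_k in (pi/k, pi/(k-1)), for k >= 4.\<close>
definition eta :: "nat \<Rightarrow> real" where
  "eta k = (THE \<eta>. pi / real k < \<eta> \<and> \<eta> < pi / (real k - 1) \<and> Phi k \<eta> = 0)"

definition Psi :: "nat \<Rightarrow> real \<Rightarrow> real" where
  "Psi j \<eta> = sin \<eta> + absa \<eta> ^ (j - 2) * sin ((real j + 1) * \<eta>)"

end

theory Submission
  imports Defs "HOL-Analysis.Analysis"
begin


lemma absa_deriv[derivative_intros]:
  assumes "cos x \<noteq> 0"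
  shows "(absa has_real_derivative (2 * absa x ^ 2 * sin x)) (at x within S)"
proof -
  have "((\<lambda>y. 1 / (2 * cos y)) has_real_derivative (2 * (1/(2*cos x)) ^ 2 * sin x)) (at x within S)"
    using assms by (auto intro!: derivative_eq_intros simp: field_simps power2_eq_square)
  then show ?thesis unfolding absa_def[abs_def] by simp
qed

definition DPhi :: "nat \<Rightarrow> real \<Rightarrow> real" where
 "DPhi k x = (let b = absa x; b' = 2 * b^2 * sin x in
    - 4 * b^3 * b' * sin ((real k - 1) * x) + (1 - b^4) * (real k - 1) * cos ((real k - 1) * x)
    - 3 * b^2 * b' * sin ((real k - 2) * x) - b^3 * (real k - 2) * cos ((real k - 2) * x)
    + real k * b^(k-1) * b' * sin x + b^k * cos x)"

lemma Phi_deriv: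
  assumes "cos x \<noteq> 0"
  shows "(Phi k has_real_derivative DPhi k x) (at x within S)"
proof -
  have "((\<lambda>x. (1 - absa x ^ 4) * sin ((real k - 1) * x)
              - absa x ^ 3 * sin ((real k - 2) * x)
              + absa x ^ k * sin x) has_real_derivative DPhi k x) (at x within S)"
    unfolding DPhi_def Let_def
    using assms apply (intro derivative_eq_intros)
    apply (assumption | rule refl)+
    apply (simp add: algebra_simps power2_eq_square)
    done
  then show ?thesis unfolding Phi_def[abs_def] by simp
qed



lemma kpow_bound:
  fixes b :: real
  assumes "0 \<le> b" "b \<le> 3/4" "b^4 \<le> 1/4" "k \<ge> 5"
  shows "real k * b^(k-1) \<le> 5/4"
  using assms(4)
proof (induction k rule: nat_induct_at_least)
  case base
  then show ?case using assms by simp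
next
  case (Suc n)
  have "real (Suc n) * b ^ (Suc n - 1) = ((real n + 1) * b) * b^(n-1)"
    using Suc.hyps by (cases n) auto
  also have "\<dots> \<le> real n * b^(n-1)"
  proof (rule mult_right_mono)
    have "(real n + 1) * b \<le> (real n + 1) * (3/4)" using assms by (intro mult_left_mono) auto
    also have "\<dots> \<le> real n" using Suc.hyps by simp
    finally show "(real n + 1) * b \<le> real n" .
  qed (use assms in auto)
  finally show ?case using Suc.IH by linarith
qed

lemma sqrt2_bound: "7/10 \<le> sqrt 2 / 2"
proof -
  have "14/10 \<le> sqrt 2" by (rule real_le_rsqrt) (simp add: power2_eq_square)
  then show ?thesis by simp
qed

lemma DPhi_neg:
  assumes k: "k \<ge> 5" and x1: "pi / real k \<le> x" and x2: "x \<le> pi / (real k - 1)"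
  shows "DPhi k x < 0"
proof -
  define b where "b = absa x"
  define c where "c = cos x"
  define s where "s = sin x"
  have k5: "real k \<ge> 5" using k by simp
  have x0: "0 < x" using x1 k5 by (smt (verit) divide_pos_pos pi_gt_zero)
  have x4: "x \<le> pi/4"
  proof -
    have "pi / (real k - 1) \<le> pi / 4" using k5 by (intro divide_left_mono) auto
    then show ?thesis using x2 by linarith
  qed
  have c1: "sqrt 2 / 2 \<le> c" unfolding c_def using cos_monotone_0_pi_le[of x "pi/4"] x0 x4 cos_45 by simp
  have c0: "c > 0" using c1 sqrt2_bound by linarith
  have c2: "c^2 \<ge> 1/2"
  proof -
    have "(sqrt 2 / 2)^2 \<le> c^2" using c1 by (intro power_mono) auto
    then show ?thesis by (simp add: power_divide)
  qed
  have s0: "s > 0" unfolding s_def using x0 x4 by (intro sin_gt_zero) auto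
  have s2: "s^2 \<le> 1/2" using c2 sin_cos_squared_add[of x] unfolding s_def c_def by linarith
  have bc: "b = 1 / (2*c)" unfolding b_def c_def absa_def by simp
  have b0: "b > 0" using c0 bc by simp
  have b2: "b^2 \<le> 1/2"
  proof -
    have "b^2 = 1 / (4 * c^2)" using bc by (simp add: power_divide power_mult_distrib)
    also have "\<dots> \<le> 1/2" using c2 c0 by (simp add: divide_simps)
    finally show ?thesis .
  qed
  have b71: "b \<le> 71/100"
  proof (rule ccontr)
    assume "\<not> ?thesis"
    then have "(71/100)^2 < b^2" by (intro power_strict_mono) auto
    then show False using b2 by (simp add: power2_eq_square)
  qed
  have b4: "b^4 \<le> 1/4"
  proof -
    have "b^4 = (b^2)^2" by simp
    also have "\<dots> \<le> (1/2)^2" using b2 by (intro power_mono) auto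
    finally show ?thesis by (simp add: power2_eq_square)
  qed
  have b3: "b^3 \<le> 355/1000"
  proof -
    have "b^3 = b * b^2" by (simp add: power2_eq_square power3_eq_cube)
    also have "\<dots> \<le> (71/100) * (1/2)" using b71 b2 b0 by (intro mult_mono) auto
    finally show ?thesis by simp
  qed
  have bk: "b^k \<le> 1/4"
  proof -
    have "b^k \<le> b^4" using b0 b71 k by (intro power_decreasing) auto
    then show ?thesis using b4 by simp
  qed
  have kb: "real k * b^(k-1) \<le> 5/4" using kpow_bound[of b k] b0 b71 b4 k by simp
  define S1 where "S1 = sin ((real k - 1) * x)"
  define S2 where "S2 = sin ((real k - 2) * x)"
  define C1 where "C1 = cos ((real k - 1) * x)"
  define C2 where "C2 = cos ((real k - 2) * x)"
  have kx: "(real k - 1) * x \<le> pi"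
  proof -
    have "(real k - 1) * x \<le> (real k - 1) * (pi / (real k - 1))" using x2 k5 by (intro mult_left_mono) auto
    then show ?thesis using k5 by simp
  qed
  have S1: "S1 \<ge> 0" unfolding S1_def using kx x0 k5 by (intro sin_ge_zero) auto
  have S2: "S2 \<ge> 0" unfolding S2_def
  proof (intro sin_ge_zero)
    show "0 \<le> (real k - 2) * x" using x0 k5 by auto
    have "(real k - 2) * x \<le> (real k - 1) * x" using x0 by (intro mult_right_mono) auto
    then show "(real k - 2) * x \<le> pi" using kx by linarith
  qed
  have C1: "C1 \<le> - (7/10)"
  proof -
    have "(real k - 1) * (pi / real k) \<le> (real k - 1) * x" using x1 k5 by (intro mult_left_mono) auto
    moreover have "(real k - 1) * (pi / real k) = pi - pi / real k" using k5 by (simp add: field_simps)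
    moreover have "pi / real k \<le> pi/4" using k5 by (intro divide_left_mono) auto
    ultimately have "pi - pi/4 \<le> (real k - 1) * x" by (smt (verit))
    then have "cos ((real k - 1) * x) \<le> cos (pi - pi/4)" using kx by (intro cos_monotone_0_pi_le) auto
    moreover have "cos (pi - pi/4) = - (sqrt 2 / 2)" by (simp only: cos_pi_minus cos_45)
    ultimately show ?thesis unfolding C1_def using sqrt2_bound by linarith
  qed
  have C2: "C2 \<ge> -1" unfolding C2_def by simp
  have bd: "2 * b^2 * s * s \<le> 1/2"
  proof -
    have "2 * b^2 * s * s = 2 * b^2 * s^2" by (simp add: power2_eq_square)
    also have "\<dots> \<le> 2 * (1/2) * (1/2)" using b2 s2 by (intro mult_mono) auto
    finally show ?thesis by simp
  qed
  have T1: "- 4 * b^3 * (2 * b^2 * s) * S1 \<le> 0" using b0 s0 S1 by (simp add: mult_nonneg_nonneg)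
  have T3: "- 3 * b^2 * (2 * b^2 * s) * S2 \<le> 0" using b0 s0 S2 by (simp add: mult_nonneg_nonneg)
  have T2: "(1 - b^4) * (real k - 1) * C1 \<le> - (21/40) * real k + 21/40"
  proof -
    have "(3/4) * (real k - 1) * (7/10) \<le> ((1 - b^4) * (real k - 1)) * (- C1)"
      using b4 C1 k5 by (intro mult_mono) auto
    moreover have "(1 - b^4) * (real k - 1) * (- C1) = - ((1 - b^4) * (real k - 1) * C1)" by simp
    moreover have "(3/4) * (real k - 1) * (7/10) = (21/40) * real k - 21/40" by (simp add: field_simps)
    ultimately show ?thesis by linarith
  qed
  have T4: "- (b^3 * (real k - 2) * C2) \<le> (355/1000) * real k - 710/1000"
  proof -
    have "b^3 * (real k - 2) * (- C2) \<le> b^3 * (real k - 2) * 1"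
      using C2 k5 b0 by (intro mult_left_mono) auto
    moreover have "b^3 * (real k - 2) \<le> (355/1000) * (real k - 2)"
      using b3 k5 by (intro mult_right_mono) auto
    moreover have "b^3 * (real k - 2) * (- C2) = - (b^3 * (real k - 2) * C2)" by simp
    moreover have "(355/1000) * (real k - 2) = (355/1000) * real k - 710/1000" by (simp add: field_simps)
    ultimately show ?thesis by linarith
  qed
  have T5: "real k * b^(k-1) * (2 * b^2 * s) * s \<le> 5/8"
  proof -
    have "real k * b^(k-1) * (2 * b^2 * s * s) \<le> (5/4) * (1/2)"
      using kb bd b0 s0 by (intro mult_mono) auto
    then show ?thesis by (simp add: mult.assoc)
  qed
  have T6: "b^k * c \<le> 1/4"
  proof -
    have "c \<le> 1" unfolding c_def by simp
    then have "b^k * c \<le> b^k * 1" using b0 by (intro mult_left_mono) auto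
    then show ?thesis using bk by simp
  qed
  have "DPhi k x = - 4 * b^3 * (2 * b^2 * s) * S1 + (1 - b^4) * (real k - 1) * C1
    - 3 * b^2 * (2 * b^2 * s) * S2 - b^3 * (real k - 2) * C2
    + real k * b^(k-1) * (2 * b^2 * s) * s + b^k * c"
    unfolding DPhi_def Let_def b_def s_def c_def S1_def S2_def C1_def C2_def by simp
  then show ?thesis using T1 T2 T3 T4 T5 T6 k5 by linarith
qed



lemma basic_facts:
  assumes "0 < x" "x \<le> pi/4"
  shows "absa x > 0" "absa x ^ 2 \<le> 1/2" "cos x > 0" "sin x > 0" "2 * absa x * cos x = 1"
    "absa x < 1" "absa x ^ 4 \<le> 1/4"
proof -
  have c1: "sqrt 2 / 2 \<le> cos x" using cos_monotone_0_pi_le[of x "pi/4"] assms cos_45 by simp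
  show c0: "cos x > 0" using c1 sqrt2_bound by linarith
  have c2: "cos x^2 \<ge> 1/2"
  proof -
    have "(sqrt 2 / 2)^2 \<le> cos x^2" using c1 by (intro power_mono) auto
    then show ?thesis by (simp add: power_divide)
  qed
  show "sin x > 0" using assms by (intro sin_gt_zero) auto
  have bc: "absa x = 1 / (2 * cos x)" unfolding absa_def by simp
  show b0: "absa x > 0" using c0 bc by simp
  show "2 * absa x * cos x = 1" using bc c0 by simp
  have "absa x ^2 = 1 / (4 * cos x^2)" using bc by (simp add: power_divide power_mult_distrib)
  also have "\<dots> \<le> 1/2" using c2 c0 by (simp add: divide_simps)
  finally show b2: "absa x ^ 2 \<le> 1/2" .
  show "absa x < 1"
  proof (rule ccontr)
    assume "\<not> ?thesis"
    then have "1 \<le> absa x ^ 2" by (simp add: one_le_power)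
    then show False using b2 by simp
  qed
  have "absa x ^4 = (absa x ^2)^2" by simp
  also have "\<dots> \<le> (1/2)^2" using b2 by (intro power_mono) auto
  finally show "absa x ^ 4 \<le> 1/4" by (simp add: power2_eq_square)
qed

lemma Phi_left:
  assumes k: "k \<ge> 5"
  shows "Phi k (pi / real k) > 0"
proof -
  define x where "x = pi / real k"
  have k5: "real k \<ge> 5" using k by simp
  have x0: "0 < x" unfolding x_def using k5 by simp
  have x4: "x \<le> pi/4" unfolding x_def using k5 by (intro divide_left_mono) auto
  note F = basic_facts[OF x0 x4]
  define b where "b = absa x"
  have e1: "(real k - 1) * x = pi - x" unfolding x_def using k5 by (simp add: field_simps)
  have e2: "(real k - 2) * x = pi - 2 * x" unfolding x_def using k5 by (simp add: field_simps)
  have "Phi k x = (1 - b^4) * sin x - b^3 * (2 * sin x * cos x) + b^k * sin x"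
    unfolding Phi_def e1 e2 b_def by (simp add: sin_double)
  also have "b^3 * (2 * sin x * cos x) = b^2 * sin x * (2 * b * cos x)"
    by (simp add: power2_eq_square power3_eq_cube algebra_simps)
  also have "2 * b * cos x = 1" using F unfolding b_def by simp
  finally have "Phi k x = sin x * (1 - b^4 - b^2 + b^k)" by (simp add: algebra_simps)
  moreover have "1 - b^4 - b^2 + b^k > 0"
  proof -
    have "b^k > 0" unfolding b_def using F by simp
    then show ?thesis using F unfolding b_def by linarith
  qed
  ultimately show ?thesis using F x_def by simp
qed

lemma Phi_right:
  assumes k: "k \<ge> 5"
  shows "Phi k (pi / (real k - 1)) < 0"
proof -
  define x where "x = pi / (real k - 1)"
  have k5: "real k \<ge> 5" using k by simp
  have x0: "0 < x" unfolding x_def using k5 by simp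
  have x4: "x \<le> pi/4" unfolding x_def using k5 by (intro divide_left_mono) auto
  note F = basic_facts[OF x0 x4]
  define b where "b = absa x"
  have e1: "(real k - 1) * x = pi" unfolding x_def using k5 by (simp add: field_simps)
  have e2: "(real k - 2) * x = pi - x" unfolding x_def using k5 by (simp add: field_simps)
  have "Phi k x = sin x * (b^k - b^3)"
    unfolding Phi_def e1 e2 b_def by (simp add: algebra_simps)
  moreover have "b^k < b^3" unfolding b_def using F k by (intro power_strict_decreasing) auto
  ultimately show ?thesis using F x_def by (simp add: mult_pos_neg)
qed

lemma eta_ge5:
  assumes k: "k \<ge> 5"
  shows "pi / real k < eta k \<and> eta k < pi / (real k - 1) \<and> Phi k (eta k) = 0"
proof -
  define a where "a = pi / real k"
  define c where "c = pi / (real k - 1)"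
  have k5: "real k \<ge> 5" using k by simp
  have ac: "a < c" unfolding a_def c_def using k5 by (intro divide_strict_left_mono) auto
  have a0: "0 < a" unfolding a_def using k5 by simp
  have c4: "c \<le> pi/4" unfolding c_def using k5 by (intro divide_left_mono) auto
  have der: "DERIV (Phi k) x :> DPhi k x" if "a \<le> x" "x \<le> c" for x
  proof -
    have "cos x > 0" using basic_facts(3)[of x] that a0 c4 by auto
    then show ?thesis by (intro Phi_deriv) auto
  qed
  have neg: "DPhi k x < 0" if "a \<le> x" "x \<le> c" for x
    using DPhi_neg[OF k] that unfolding a_def c_def by auto
  have cont: "continuous_on {a..c} (Phi k)"
    by (rule DERIV_atLeastAtMost_imp_continuous_on) (use der in blast)
  have pa: "Phi k a > 0" unfolding a_def using Phi_left[OF k] .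
  have pc: "Phi k c < 0" unfolding c_def using Phi_right[OF k] .
  obtain z where z: "a \<le> z" "z \<le> c" "Phi k z = 0"
    using IVT2'[of "Phi k" c 0 a] cont pa pc ac by auto
  have za: "a < z" using z pa by (cases "a = z") auto
  have zc: "z < c" using z pc by (cases "c = z") auto
  have dec: "Phi k u > Phi k v" if "a \<le> u" "u < v" "v \<le> c" for u v
    using that by (intro DERIV_neg_imp_decreasing[of u v]) (auto intro!: der neg exI[of _ "DPhi k _"])
  have uniq: "y = z" if "a < y" "y < c" "Phi k y = 0" for y
  proof (rule ccontr)
    assume "y \<noteq> z"
    then consider "y < z" | "z < y" by linarith
    then show False
    proof cases
      case 1 then show False using dec[of y z] that z by auto
    next
      case 2 then show False using dec[of z y] that z za zc by auto
    qed
  qed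
  have "eta k = z"
    unfolding eta_def
  proof (rule the_equality)
    show "pi / real k < z \<and> z < pi / (real k - 1) \<and> Phi k z = 0" using za zc z a_def c_def by auto
  next
    fix y assume "pi / real k < y \<and> y < pi / (real k - 1) \<and> Phi k y = 0"
    then show "y = z" using uniq a_def c_def by auto
  qed
  then show ?thesis using za zc z a_def c_def by auto
qed



lemma sin_rec: "sin ((a::real) + x) = 2 * cos x * sin a - sin (a - x)"
  by (simp add: sin_add sin_diff)

lemma sin_mult_rec: "sin (((n::real) + 1) * x) = 2 * cos x * sin (n * x) - sin ((n - 1) * x)"
proof -
  have "(n + 1) * x = n * x + x" "(n - 1) * x = n * x - x" by (simp_all add: algebra_simps)
  then show ?thesis using sin_rec[of "n*x" x] by simp
qed

lemma sin_multiples: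
  fixes x :: real
  shows "sin (2*x) = sin x * (2*cos x)"
    and "sin (3*x) = sin x * (4*cos x^2 - 1)"
    and "sin (4*x) = sin x * (8*cos x^3 - 4*cos x)"
    and "sin (5*x) = sin x * (16*cos x^4 - 12*cos x^2 + 1)"
    and "sin (6*x) = sin x * (32*cos x^5 - 32*cos x^3 + 6*cos x)"
proof -
  show s2: "sin (2*x) = sin x * (2*cos x)" by (simp add: sin_double)
  have s3: "sin (3*x) = 2 * cos x * sin (2*x) - sin x"
    using sin_mult_rec[of 2 x] by simp
  show s3': "sin (3*x) = sin x * (4*cos x^2 - 1)" unfolding s3 s2 by (simp add: algebra_simps power2_eq_square)
  have s4: "sin (4*x) = 2 * cos x * sin (3*x) - sin (2*x)"
    using sin_mult_rec[of 3 x] by simp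
  show s4': "sin (4*x) = sin x * (8*cos x^3 - 4*cos x)" unfolding s4 s3' s2 by (simp add: algebra_simps power2_eq_square power3_eq_cube)
  have s5: "sin (5*x) = 2 * cos x * sin (4*x) - sin (3*x)"
    using sin_mult_rec[of 4 x] by simp
  show s5': "sin (5*x) = sin x * (16*cos x^4 - 12*cos x^2 + 1)" unfolding s5 s4' s3'
    by (simp add: algebra_simps power2_eq_square power3_eq_cube power4_eq_xxxx)
  have s6: "sin (6*x) = 2 * cos x * sin (5*x) - sin (4*x)"
    using sin_mult_rec[of 5 x] by simp
  show "sin (6*x) = sin x * (32*cos x^5 - 32*cos x^3 + 6*cos x)" unfolding s6 s5' s4'
    by (simp add: algebra_simps power2_eq_square power3_eq_cube power4_eq_xxxx numeral_eq_Suc)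
qed

lemma Phi4_eq:
  assumes "cos x > 0"
  shows "Phi 4 x = sin x * (1 - absa x ^ 2) * (1 - 2 * absa x ^ 4) / absa x ^ 2"
proof -
  define b where "b = absa x"
  have b0: "b > 0" using assms unfolding b_def absa_def by simp
  have c2: "4 * cos x ^ 2 = 1 / b^2" using assms unfolding b_def absa_def by (simp add: power2_eq_square)
  have c1: "b^3 * (2 * cos x) = b^2" using assms unfolding b_def absa_def by (simp add: power2_eq_square power3_eq_cube)
  have "Phi 4 x = (1 - b^4) * sin (3*x) - b^3 * sin (2*x) + b^4 * sin x"
    unfolding Phi_def b_def by (simp add: numeral_eq_Suc)
  also have "\<dots> = sin x * ((1 - b^4) * (4 * cos x ^ 2 - 1) - b^3 * (2 * cos x) + b^4)"
    unfolding sin_multiples by (simp add: algebra_simps)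
  also have "\<dots> = sin x * ((1 - b^4) * (1 / b^2 - 1) - b^2 + b^4)"
    unfolding c1 c2 ..
  also have "(1 - b^4) * (1 / b^2 - 1) - b^2 + b^4 = (1 - b^2) * (1 - 2 * b^4) / b^2"
    using b0 by (simp add: field_simps)
  finally show ?thesis unfolding b_def by simp
qed

lemma Phi4_zero_iff:
  assumes "pi/4 < x" "x < pi/3"
  shows "Phi 4 x = 0 \<longleftrightarrow> cos x ^ 4 = 1/8"
proof -
  have "0 < pi/4" by simp
  then have x0: "0 < x" using assms(1) by linarith
  have "cos (pi/3) < cos x" by (rule cos_monotone_0_pi) (use assms x0 in auto)
  then have c12: "cos x > 1/2" using cos_60 by linarith
  have s0: "sin x > 0" using x0 assms by (intro sin_gt_zero) auto
  define b where "b = absa x"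
  define c where "c = cos x"
  have c0: "c > 0" using c12 c_def by simp
  have bc: "b = 1 / (2 * c)" unfolding b_def absa_def c_def by simp
  have b0: "b > 0" using c0 bc by simp
  have "2 * c > 1" using c12 c_def by simp
  then have b1: "b < 1" unfolding bc by simp
  have "b^2 < 1^2" using b0 b1 by (intro power_strict_mono) auto
  then have "b^2 < 1" by simp
  then have ne: "sin x * (1 - b^2) / b^2 \<noteq> 0" using s0 b0 by simp
  have "Phi 4 x = (sin x * (1 - b^2) / b^2) * (1 - 2 * b^4)"
    using Phi4_eq[of x] c12 unfolding b_def by (simp only: times_divide_eq_right times_divide_eq_left mult_ac)
  then have "Phi 4 x = 0 \<longleftrightarrow> 1 - 2 * b^4 = 0" using ne by simp
  also have "b^4 = 1 / (16 * c^4)" unfolding bc by (simp add: power_divide power_mult_distrib)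
  also have "1 - 2 * (1 / (16 * c^4)) = 0 \<longleftrightarrow> c^4 = 1/8"
  proof -
    have "c^4 > 0" using c0 by simp
    then show ?thesis by (simp add: field_simps)
  qed
  finally show ?thesis unfolding c_def .
qed

lemma eta4:
  "pi / 4 < eta 4 \<and> eta 4 < pi / 3 \<and> Phi 4 (eta 4) = 0 \<and> cos (eta 4) ^ 4 = 1/8"
proof -
  have cont: "continuous_on {pi/4..pi/3} (\<lambda>x. cos x ^ 4)"
    by (intro continuous_intros)
  have s4: "sqrt 2 ^ 4 = 4"
  proof -
    have "sqrt 2 ^ 4 = (sqrt 2 * sqrt 2) * (sqrt 2 * sqrt 2)" by (simp only: power4_eq_xxxx mult.assoc)
    also have "\<dots> = 4" by simp
    finally show ?thesis .
  qed
  have v1: "cos (pi/4) ^ 4 = 1/4" unfolding cos_45 power_divide s4 by simp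
  have v2: "cos (pi/3) ^ 4 = 1/16" unfolding cos_60 by (simp add: power_divide)
  have le: "pi/4 \<le> pi/3" by (simp add: divide_left_mono)
  obtain z where z: "pi/4 \<le> z" "z \<le> pi/3" "cos z ^ 4 = 1/8"
    using IVT2'[of "\<lambda>x. cos x ^ 4" "pi/3" "1/8" "pi/4", OF _ _ le cont] v1 v2 by auto
  have z1: "pi/4 < z" using z v1 by (cases "z = pi/4") auto
  have z2: "z < pi/3" using z v2 by (cases "z = pi/3") auto
  have "0 < pi/4" by simp
  then have z0: "0 < z" using z1 by linarith
  have "pi/3 < pi/2" by (simp add: divide_strict_left_mono)
  then have zpi: "z < pi/2" using z2 by linarith
  have uniq: "y = z" if "pi/4 < y" "y < pi/3" "cos y ^ 4 = 1/8" for y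
  proof -
    have y0: "0 < y" using that z0 z1 \<open>0 < pi/4\<close> by linarith
    have ypi: "y < pi/2" using that \<open>pi/3 < pi/2\<close> by linarith
    have "cos y > 0" using y0 ypi by (intro cos_gt_zero_pi) auto
    moreover have "cos z > 0" using z0 zpi by (intro cos_gt_zero_pi) auto
    moreover have "cos y ^ 4 = cos z ^ 4" using that(3) z(3) by simp
    ultimately have "cos y = cos z" using power_eq_imp_eq_base[of "cos y" 4 "cos z"] by simp
    then show ?thesis using y0 ypi z0 zpi cos_inj_pi[of y z] by linarith
  qed
  have r4: "real (4::nat) = 4" by simp
  have r3: "pi / (4 - 1) = pi / (3::real)" by simp
  have Pz: "Phi 4 z = 0" using Phi4_zero_iff[OF z1 z2] z(3) by blast
  have "eta 4 = z"
    unfolding eta_def r4 r3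
  proof (rule the_equality)
    show "pi / 4 < z \<and> z < pi / 3 \<and> Phi 4 z = 0"
      using z1 z2 Pz by blast
  next
    fix y assume y: "pi / 4 < y \<and> y < pi / 3 \<and> Phi 4 y = 0"
    then have "cos y ^ 4 = 1/8" using Phi4_zero_iff[of y] by blast
    then show "y = z" using uniq y by blast
  qed
  then show ?thesis using z1 z2 z Pz by blast
qed



lemma cos_lower: "1 - x^2/2 \<le> cos (x::real)"
proof -
  have "cos x = cos (2 * (x/2))" by simp
  also have "\<dots> = 1 - 2 * sin (x/2) ^ 2" by (rule cos_double_sin)
  finally have e: "cos x = 1 - 2 * sin (x/2) ^ 2" .
  have "\<bar>sin (x/2)\<bar> ^ 2 \<le> \<bar>x/2\<bar> ^ 2" using abs_sin_x_le_abs_x[of "x/2"] by (intro power_mono) auto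
  then have "sin (x/2) ^ 2 \<le> (x/2)^2" by (simp add: power_divide)
  then show ?thesis unfolding e by (simp add: power_divide)
qed

lemma sin_lower:
  assumes "0 \<le> x" "x \<le> pi/2"
  shows "x * cos x \<le> sin x"
proof -
  have "(\<lambda>y. sin y - y * cos y) 0 \<le> (\<lambda>y. sin y - y * cos y) x"
  proof (rule DERIV_nonneg_imp_nondecreasing[OF assms(1)])
    fix y assume y: "0 \<le> y" "y \<le> x"
    have "DERIV (\<lambda>y. sin y - y * cos y) y :> y * sin y"
      apply (intro derivative_eq_intros)
      apply (assumption | rule refl)+
      apply (simp add: algebra_simps)
      done
    moreover have "y * sin y \<ge> 0" using y assms by (intro mult_nonneg_nonneg sin_ge_zero) auto
    ultimately show "\<exists>D. DERIV (\<lambda>y. sin y - y * cos y) y :> D \<and> D \<ge> 0" by blast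
  qed
  then show ?thesis by simp
qed

lemma pow23:
  assumes "k \<ge> 6"
  shows "(2/3::real)^(k-2) * (real k + 1) \<le> 2"
  using assms
proof (induction k rule: nat_induct_at_least)
  case base
  then show ?case by (simp add: power4_eq_xxxx)
next
  case (Suc n)
  have sn: "Suc n - 2 = Suc (n - 2)" using Suc.hyps by simp
  have e: "(2/3::real)^(Suc n - 2) = (2/3) * (2/3)^(n-2)"
    by (simp only: sn power_Suc)
  have "(2/3::real)^(Suc n - 2) * (real (Suc n) + 1) = (2/3)^(n-2) * ((2/3) * (real n + 2))"
    unfolding e by (simp add: algebra_simps)
  also have "\<dots> \<le> (2/3)^(n-2) * (real n + 1)"
    using Suc.hyps by (intro mult_left_mono) auto
  finally show ?case using Suc.IH by linarith
qed

lemma Psi_crude: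
  assumes "cos x > 0" "j \<ge> 2" "absa x ^ (j-2) < sin x"
  shows "Psi j x > 0"
proof -
  have b0: "absa x > 0" using assms(1) unfolding absa_def by simp
  have "absa x ^ (j-2) * (-1) \<le> absa x ^ (j-2) * sin ((real j + 1) * x)"
    using b0 by (intro mult_left_mono) auto
  then show ?thesis unfolding Psi_def using assms(3) by linarith
qed

lemma Psi4:
  assumes "cos x > 1/2" "sin x > 0"
  shows "Psi 4 x > 0"
proof -
  define c where "c = cos x"
  have c0: "c > 1/2" using assms c_def by simp
  have "Psi 4 x = sin x + (1 / (2*c))^2 * sin (5 * x)"
    unfolding Psi_def absa_def c_def by (simp add: numeral_eq_Suc)
  also have "\<dots> = sin x + sin x * (16*c^4 - 12*c^2 + 1) / (4*c^2)"
    unfolding sin_multiples c_def[symmetric] by (simp add: power_divide power_mult_distrib)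
  also have "\<dots> = sin x * ((4*c^2 - 1)^2 / (4*c^2))"
  proof -
    have "c^2 > 0" using c0 by simp
    then show ?thesis by (simp add: field_simps) (simp add: power2_eq_square power4_eq_xxxx algebra_simps)
  qed
  finally have e: "Psi 4 x = sin x * ((4*c^2 - 1)^2 / (4*c^2))" .
  have "4*c^2 - 1 > 0"
  proof -
    have "(1/2)^2 < c^2" using c0 by (intro power_strict_mono) auto
    then show ?thesis by (simp add: power2_eq_square)
  qed
  then show ?thesis unfolding e using assms(2) c0 by simp
qed

lemma Psi5:
  assumes "cos x > 0" "sin x > 0"
  shows "Psi 5 x > 0"
proof -
  define c where "c = cos x"
  have c0: "c > 0" using assms c_def by simp
  have "Psi 5 x = sin x + (1 / (2*c))^3 * sin (6 * x)"
    unfolding Psi_def absa_def c_def by (simp add: numeral_eq_Suc)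
  also have "\<dots> = sin x + sin x * (32*c^5 - 32*c^3 + 6*c) / (8*c^3)"
    unfolding sin_multiples c_def[symmetric] by (simp add: power_divide power_mult_distrib)
  also have "\<dots> = sin x * ((16*c^4 - 12*c^2 + 3) / (4*c^2))"
  proof -
    have e5: "c^5 = c^2 * c^3" "c^4 = c^2*c^2" by (simp_all add: power_add[symmetric])
    show ?thesis unfolding e5 using c0
      by (simp add: field_simps) (simp add: algebra_simps power2_eq_square power3_eq_cube)
  qed
  finally have e: "Psi 5 x = sin x * ((16*c^4 - 12*c^2 + 3) / (4*c^2))" .
  have "16*c^4 - 12*c^2 + 3 = (4*c^2 - 3/2)^2 + 3/4"
    by (simp add: power2_eq_square power4_eq_xxxx algebra_simps)
  moreover have "(4*c^2 - 3/2)^2 \<ge> 0" by simp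
  ultimately have "16*c^4 - 12*c^2 + 3 > 0" by linarith
  then show ?thesis unfolding e using assms(2) c0 by simp
qed



theorem lemma4p4:
  fixes k j :: nat and x :: real
  assumes "k \<ge> 4" and "eta (k + 1) \<le> x" and "x < eta k" and "j \<ge> k"
  shows "Psi j x > 0"
proof -
  have k4: "real k \<ge> 4" using assms(1) by simp
  have E1: "pi / real (k+1) < eta (k+1)" using eta_ge5[of "k+1"] assms(1) by auto
  have E2: "eta k < pi / (real k - 1)"
  proof (cases "k = 4")
    case True
    then show ?thesis using eta4 by simp
  next
    case False
    then show ?thesis using eta_ge5[of k] assms(1) by auto
  qed
  have xl: "pi / (real k + 1) < x" using E1 assms(2) by (simp add: add.commute)
  have xu: "x < pi / (real k - 1)" using E2 assms(3) by simp
  have "0 < pi / (real k + 1)" using k4 by simp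
  then have x0: "0 < x" using xl by linarith
  have "pi / (real k - 1) \<le> pi / 3" using k4 by (intro divide_left_mono) auto
  then have x3: "x < pi / 3" using xu by linarith
  have "cos (pi/3) < cos x" by (rule cos_monotone_0_pi) (use x0 x3 in auto)
  then have c12: "cos x > 1/2" using cos_60 by linarith
  have "pi / 3 < pi" by simp
  then have s0: "sin x > 0" using x0 x3 by (intro sin_gt_zero) auto
  define b where "b = absa x"
  have bc: "b = 1 / (2 * cos x)" unfolding b_def absa_def by simp
  have b0: "b > 0" using c12 bc by simp
  have "2 * cos x > 1" using c12 by simp
  then have b1: "b < 1" unfolding bc by simp
  have powj: "b^(j-2) \<le> b^(k-2)" using b0 b1 assms(4) by (intro power_decreasing) auto
  have j2: "j \<ge> 2" using assms by simp
  have crude: "Psi j x > 0" if "b^(k-2) < sin x"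
    using Psi_crude[of x j] c12 j2 powj that unfolding b_def by linarith
  have sin_half: "sin x > 1/2" if "pi/6 < x"
  proof -
    have "pi/3 \<le> pi/2" by simp
    then have "sin (pi/6) < sin x" using that x3 by (intro sin_monotone_2pi) auto
    then show ?thesis using sin_30 by simp
  qed
  consider "k = 4" | "k = 5" | "k \<ge> 6" using assms(1) by linarith
  then show ?thesis
  proof cases
    case 1
    have x5: "pi / 5 < x" using xl 1 by simp
    have "pi / 6 < pi / 5" by (simp add: divide_strict_left_mono)
    then have sx: "sin x > 1/2" using sin_half x5 by linarith
    consider "j = 4" | "j = 5" | "j \<ge> 6" using assms(4) 1 by linarith
    then show ?thesis
    proof cases
      case 1
      then show ?thesis using Psi4[of x] c12 s0 by simp
    next
      case 2
      then show ?thesis using Psi5[of x] c12 s0 by simp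
    next
      case 3
      have e4: "x < eta 4" using assms(3) \<open>k = 4\<close> by simp
      have "eta 4 < pi / 3" using eta4 by simp
      then have "cos (eta 4) < cos x" using x0 e4 by (intro cos_monotone_0_pi) auto
      moreover have "cos (eta 4) \<ge> 0" using eta4 \<open>eta 4 < pi/3\<close>
        by (intro cos_ge_zero) (auto simp: divide_strict_left_mono)
      ultimately have "cos (eta 4) ^ 4 < cos x ^ 4" by (intro power_strict_mono) auto
      then have c4: "cos x ^ 4 > 1/8" using eta4 by simp
      have "b^4 = 1 / (16 * cos x ^ 4)" unfolding bc by (simp add: power_divide power_mult_distrib)
      also have "\<dots> < 1/2" using c4 by (simp add: divide_simps)
      finally have b4: "b^4 < 1/2" .
      have "b^(j-2) \<le> b^4" using b0 b1 3 by (intro power_decreasing) auto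
      then have "b^(j-2) < sin x" using b4 sx by linarith
      then show ?thesis using Psi_crude[of x j] c12 j2 unfolding b_def by linarith
    qed
  next
    case 2
    have x6: "pi / 6 < x" using xl 2 by simp
    have x4: "x < pi / 4" using xu 2 by simp
    have b2: "b^2 \<le> 1/2" using basic_facts[of x] x0 x4 unfolding b_def by auto
    have "b^3 = b * b^2" by (simp add: power2_eq_square power3_eq_cube)
    also have "\<dots> \<le> b * (1/2)" using b2 b0 by (intro mult_left_mono) auto
    also have "\<dots> < 1/2" using b1 by simp
    finally have "b^(k-2) < 1/2" using 2 by simp
    then show ?thesis using crude sin_half x6 by linarith
  next
    case 3
    have k6: "real k \<ge> 6" using 3 by simp
    have "pi / (real k - 1) \<le> pi / 5" using k6 by (intro divide_left_mono) auto
    then have x5: "x \<le> pi / 5" using xu by linarith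
    have "pi \<le> 16/5" using pi_approx(2) by simp
    then have x64: "x \<le> 16/25" using x5 by linarith
    have "x^2 \<le> (16/25)^2" using x0 x64 by (intro power_mono) auto
    then have "1 - (16/25)^2/2 \<le> 1 - x^2/2" by simp
    then have cx: "cos x \<ge> 3/4" using cos_lower[of x] by (simp add: power2_eq_square)
    have b23: "b \<le> 2/3" unfolding bc using cx by (simp add: field_simps)
    have "b^(k-2) \<le> (2/3)^(k-2)" using b0 b23 by (intro power_mono) auto
    also have "(2/3::real)^(k-2) \<le> 2 / (real k + 1)" using pow23[OF 3] k6 by (simp add: field_simps)
    finally have bk: "b^(k-2) \<le> 2 / (real k + 1)" .
    have "x \<le> pi / 2" using x3 pi_gt_zero by linarith
    then have "x * cos x \<le> sin x" using sin_lower[of x] x0 by simp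
    moreover have "x * (3/4) \<le> x * cos x" using cx x0 by (intro mult_left_mono) auto
    moreover have "3 / (real k + 1) < x"
    proof -
      have "3 / (real k + 1) < pi / (real k + 1)" using pi_gt3 k6 by (intro divide_strict_right_mono) auto
      then show ?thesis using xl by linarith
    qed
    moreover have "(3 / (real k + 1)) * (3/4) < x * (3/4)"
      using \<open>3 / (real k + 1) < x\<close> by (intro mult_strict_right_mono) auto
    ultimately have "(3 / (real k + 1)) * (3/4) < sin x" by linarith
    moreover have "2 / (real k + 1) < (3 / (real k + 1)) * (3/4)" using k6 by (simp add: field_simps)
    ultimately show ?thesis using crude bk by linarith
  qed
qed


end
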